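(* Let the setting be as in the context, and assume in addition that $\Xi$ is 2-regular and that $m$ is a bicharacter with $m(x,y)=\overline{m(y,x)}$ for all $x,y\in\Xi$. Then for every $A\in\mathcal T^1(\mathcal H)$ and all $x,\xi\in\Xi$: $\mathcal F_U(U_{x/2}AU_{x/2})(\xi)=\mathcal F_U(A)(\xi-x)$.
   Context: $\Xi$ is a locally compact abelian group; $m:\Xi\times\Xi\to S^1$ separately continuous with $m(x+y,z)m(x,y)=m(x,y+z)m(y,z)$, $m(x,0)=m(0,x)=1$, $m(x,y)=m(-x,-y)$, Heisenberg ($x\mapsto\sigma(x,\cdot)$ with $\sigma(x,y)=m(x,y)/m(y,x)$ a topological isomorphism $\Xi\to\widehat\Xi$; $\widehat\Xi$ identified with $\Xi$). $(U_x)$ is the irreducible strongly continuous square integrable projective unitary representation on $\mathcal H$ with $U_xU_y=m(x,y)U_{x+y}$. $\Xi$ is 2-regular if $g\mapsto 2g$ is a topological automorphism of $\Xi$; $x/2$ denotes the preimage of $x$. $\mathcal F_U(A)(\xi)=\operatorname{tr}(AU_\xi^* )$. *)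

theory Defs
  imports "HOL-Analysis.Analysis"
begin

section \<open>The Hilbert space, modelled as l2 over an arbitrary index type 'i\<close>

definition l2 :: "('i \<Rightarrow> complex) set" where
  "l2 = {f. (\<lambda>i. (cmod (f i))^2) summable_on UNIV}"

definition l2inner :: "('i \<Rightarrow> complex) \<Rightarrow> ('i \<Rightarrow> complex) \<Rightarrow> complex" where
  "l2inner f g = (\<Sum>\<^sub>\<infinity>i. f i * cnj (g i))"

definition l2norm :: "('i \<Rightarrow> complex) \<Rightarrow> real" where
  "l2norm f = sqrt (\<Sum>\<^sub>\<infinity>i. (cmod (f i))^2)"

definition delta :: "'i \<Rightarrow> ('i \<Rightarrow> complex)" where
  "delta i = (\<lambda>j. if j = i then 1 else 0)"

definition l2_closed_subspace :: "('i \<Rightarrow> complex) set \<Rightarrow> bool" where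
  "l2_closed_subspace V \<longleftrightarrow> V \<subseteq> l2 \<and> (\<lambda>_. 0) \<in> V \<and>
     (\<forall>f\<in>V. \<forall>g\<in>V. (\<lambda>i. f i + g i) \<in> V) \<and> (\<forall>c. \<forall>f\<in>V. (\<lambda>i. c * f i) \<in> V) \<and>
     (\<forall>s f. (\<forall>n. s n \<in> V) \<longrightarrow> f \<in> l2 \<longrightarrow> (\<lambda>n. l2norm (\<lambda>i. s n i - f i)) \<longlonglongrightarrow> 0 \<longrightarrow> f \<in> V)"

definition bounded_op :: "(('i \<Rightarrow> complex) \<Rightarrow> ('i \<Rightarrow> complex)) \<Rightarrow> bool" where
  "bounded_op A \<longleftrightarrow> (\<forall>f\<in>l2. A f \<in> l2) \<and>
     (\<forall>f\<in>l2. \<forall>g\<in>l2. A (\<lambda>i. f i + g i) = (\<lambda>i. A f i + A g i)) \<and>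
     (\<forall>c. \<forall>f\<in>l2. A (\<lambda>i. c * f i) = (\<lambda>i. c * A f i)) \<and>
     (\<exists>C. \<forall>f\<in>l2. l2norm (A f) \<le> C * l2norm f)"

definition unitary_op :: "(('i \<Rightarrow> complex) \<Rightarrow> ('i \<Rightarrow> complex)) \<Rightarrow> bool" where
  "unitary_op U \<longleftrightarrow> bounded_op U \<and> U ` l2 = l2 \<and>
     (\<forall>f\<in>l2. \<forall>g\<in>l2. l2inner (U f) (U g) = l2inner f g)"

definition adj :: "(('i \<Rightarrow> complex) \<Rightarrow> ('i \<Rightarrow> complex)) \<Rightarrow> ('i \<Rightarrow> complex) \<Rightarrow> ('i \<Rightarrow> complex)" where
  "adj A = (\<lambda>g i. l2inner g (A (delta i)))"

definition orthonormal_fam :: "nat \<Rightarrow> (nat \<Rightarrow> ('i \<Rightarrow> complex)) \<Rightarrow> bool" where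
  "orthonormal_fam n e \<longleftrightarrow> (\<forall>k<n. e k \<in> l2) \<and>
     (\<forall>k<n. \<forall>l<n. l2inner (e k) (e l) = (if k = l then 1 else 0))"

definition trace_class :: "(('i \<Rightarrow> complex) \<Rightarrow> ('i \<Rightarrow> complex)) \<Rightarrow> bool" where
  "trace_class A \<longleftrightarrow> bounded_op A \<and>
     (\<exists>C. \<forall>n e f. orthonormal_fam n e \<longrightarrow> orthonormal_fam n f \<longrightarrow>
        (\<Sum>k<n. cmod (l2inner (A (e k)) (f k))) \<le> C)"

definition trace :: "(('i \<Rightarrow> complex) \<Rightarrow> ('i \<Rightarrow> complex)) \<Rightarrow> complex" where
  "trace T = (\<Sum>\<^sub>\<infinity>i. T (delta i) i)"

definition FU :: "('x \<Rightarrow> ('i \<Rightarrow> complex) \<Rightarrow> ('i \<Rightarrow> complex)) \<Rightarrow>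
    (('i \<Rightarrow> complex) \<Rightarrow> ('i \<Rightarrow> complex)) \<Rightarrow> 'x \<Rightarrow> complex" where
  "FU U A \<xi> = trace (\<lambda>f. A (adj (U \<xi>) f))"

definition multiplier :: "('x::topological_ab_group_add \<Rightarrow> 'x \<Rightarrow> complex) \<Rightarrow> bool" where
  "multiplier m \<longleftrightarrow> (\<forall>x y. cmod (m x y) = 1) \<and>
     (\<forall>y. continuous_on UNIV (\<lambda>x. m x y)) \<and> (\<forall>x. continuous_on UNIV (m x)) \<and>
     (\<forall>x y z. m (x + y) z * m x y = m x (y + z) * m y z) \<and>
     (\<forall>x. m x 0 = 1 \<and> m 0 x = 1) \<and>
     (\<forall>x y. m x y = m (- x) (- y))"

definition continuous_character :: "('x::topological_ab_group_add \<Rightarrow> complex) \<Rightarrow> bool" where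
  "continuous_character ch \<longleftrightarrow> continuous_on UNIV ch \<and> (\<forall>a. cmod (ch a) = 1) \<and>
     (\<forall>a b. ch (a + b) = ch a * ch b)"

definition symp :: "('x \<Rightarrow> 'x \<Rightarrow> complex) \<Rightarrow> 'x \<Rightarrow> 'x \<Rightarrow> complex" where
  "symp m x y = m x y / m y x"

text \<open>Heisenberg: x \<mapsto> sigma(x,.) is a bijection onto the continuous characters and a
  homeomorphism, the dual group carrying the compact-open topology (= topology of
  uniform convergence on compact sets), expressed via convergence of filters.\<close>
definition heisenberg :: "('x::{topological_ab_group_add,t2_space} \<Rightarrow> 'x \<Rightarrow> complex) \<Rightarrow> bool" where
  "heisenberg m \<longleftrightarrow> (\<forall>x. continuous_character (symp m x)) \<and>
     (\<forall>ch. continuous_character ch \<longrightarrow> (\<exists>!x. symp m x = ch)) \<and>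
     (\<forall>(F::'x filter) x0. F \<le> nhds x0 \<longleftrightarrow>
        (\<forall>K. compact K \<longrightarrow> (\<forall>e>0. eventually (\<lambda>x. \<forall>k\<in>K. dist (symp m x k) (symp m x0 k) < e) F)))"

definition bicharacter :: "('x::ab_group_add \<Rightarrow> 'x \<Rightarrow> complex) \<Rightarrow> bool" where
  "bicharacter m \<longleftrightarrow> (\<forall>x y z. m (x + y) z = m x z * m y z) \<and>
     (\<forall>x y z. m x (y + z) = m x y * m x z)"

definition two_regular :: "'x::topological_ab_group_add itself \<Rightarrow> bool" where
  "two_regular _ \<longleftrightarrow> bij (\<lambda>g::'x. g + g) \<and> continuous_on UNIV (inv (\<lambda>g::'x. g + g))"

definition half :: "'x::ab_group_add \<Rightarrow> 'x" where
  "half x = inv (\<lambda>g. g + g) x"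

definition haar_measure :: "'x::{topological_ab_group_add,t2_space} measure \<Rightarrow> bool" where
  "haar_measure \<mu> \<longleftrightarrow> sets \<mu> = sets borel \<and>
     (\<forall>a A. A \<in> sets borel \<longrightarrow> emeasure \<mu> ((\<lambda>y. a + y) ` A) = emeasure \<mu> A) \<and>
     (\<forall>K. compact K \<longrightarrow> emeasure \<mu> K < \<infinity>) \<and>
     (\<exists>U. open U \<and> emeasure \<mu> U > 0) \<and>
     (\<forall>A. A \<in> sets borel \<longrightarrow> emeasure \<mu> A = (INF U\<in>{U. open U \<and> A \<subseteq> U}. emeasure \<mu> U)) \<and>
     (\<forall>U. open U \<longrightarrow> emeasure \<mu> U = (SUP K\<in>{K. compact K \<and> K \<subseteq> U}. emeasure \<mu> K))"

definition proj_rep :: "('x::ab_group_add \<Rightarrow> 'x \<Rightarrow> complex) \<Rightarrow>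
    ('x \<Rightarrow> ('i \<Rightarrow> complex) \<Rightarrow> ('i \<Rightarrow> complex)) \<Rightarrow> bool" where
  "proj_rep m U \<longleftrightarrow> (\<forall>x. unitary_op (U x)) \<and>
     (\<forall>x y. \<forall>f\<in>l2. U x (U y f) = (\<lambda>i. m x y * U (x + y) f i))"

definition strongly_continuous :: "('x::topological_space \<Rightarrow> ('i \<Rightarrow> complex) \<Rightarrow> ('i \<Rightarrow> complex)) \<Rightarrow> bool" where
  "strongly_continuous U \<longleftrightarrow>
     (\<forall>f\<in>l2. \<forall>x0. ((\<lambda>x. l2norm (\<lambda>i. U x f i - U x0 f i)) \<longlongrightarrow> 0) (at x0))"

definition irreducible_rep :: "('x \<Rightarrow> ('i \<Rightarrow> complex) \<Rightarrow> ('i \<Rightarrow> complex)) \<Rightarrow> bool" where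
  "irreducible_rep U \<longleftrightarrow> (\<forall>V. l2_closed_subspace V \<longrightarrow> (\<forall>x. \<forall>f\<in>V. U x f \<in> V) \<longrightarrow>
     V = {\<lambda>_. 0} \<or> V = l2)"

definition square_integrable :: "('x::{topological_ab_group_add,t2_space} \<Rightarrow> ('i \<Rightarrow> complex) \<Rightarrow> ('i \<Rightarrow> complex)) \<Rightarrow> bool" where
  "square_integrable U \<longleftrightarrow> (\<exists>\<mu>. haar_measure \<mu> \<and>
     (\<exists>u\<in>l2. \<exists>v\<in>l2. u \<noteq> (\<lambda>_. 0) \<and> v \<noteq> (\<lambda>_. 0) \<and>
        (\<integral>\<^sup>+x. ennreal ((cmod (l2inner (U x u) v))^2) \<partial>\<mu>) < \<infinity>))"

end

theory Submission
  imports Defs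
begin


lemma sq_add_le: "(cmod (a + b))^2 \<le> 2 * (cmod a)^2 + 2 * (cmod b)^2"
proof -
  have "cmod (a+b) \<le> cmod a + cmod b" by (rule norm_triangle_ineq)
  hence "(cmod (a+b))^2 \<le> (cmod a + cmod b)^2"
    by (simp add: power_mono)
  also have "\<dots> \<le> 2 * (cmod a)^2 + 2 * (cmod b)^2"
  proof -
    have "2 * (cmod a)^2 + 2 * (cmod b)^2 - (cmod a + cmod b)^2 = (cmod a - cmod b)^2"
      by (simp add: power2_eq_square algebra_simps)
    moreover have "(cmod a - cmod b)^2 \<ge> 0" by simp
    ultimately show ?thesis by linarith
  qed
  finally show ?thesis .
qed

lemma l2_sum_summ: "f \<in> l2 \<Longrightarrow> (\<lambda>i. (cmod (f i))^2) summable_on UNIV"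
  by (simp add: l2_def)

lemma l2_add: assumes "f \<in> l2" "g \<in> l2" shows "(\<lambda>i. f i + g i) \<in> l2"
proof -
  have s: "(\<lambda>i. 2 * (cmod (f i))^2 + 2 * (cmod (g i))^2) summable_on UNIV"
    using assms by (intro summable_on_add summable_on_cmult_right) (auto simp: l2_def)
  show ?thesis unfolding l2_def mem_Collect_eq
    by (rule summable_on_comparison_test[OF s]) (auto simp: sq_add_le)
qed

lemma l2_scale: assumes "f \<in> l2" shows "(\<lambda>i. c * f i) \<in> l2"
proof -
  have "(\<lambda>i. (cmod c)^2 * (cmod (f i))^2) summable_on UNIV"
    using assms by (intro summable_on_cmult_right) (auto simp: l2_def)
  thus ?thesis unfolding l2_def by (simp add: norm_mult power_mult_distrib)
qed

lemma l2_diff: assumes "f \<in> l2" "g \<in> l2" shows "(\<lambda>i. f i - g i) \<in> l2"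
proof -
  have "(\<lambda>i. f i + (-1) * g i) \<in> l2" using assms by (intro l2_add l2_scale)
  thus ?thesis by simp
qed

lemma l2_zero: "(\<lambda>i. 0) \<in> l2" by (simp add: l2_def)

lemma l2_sum: assumes "finite F" "\<And>k. k \<in> F \<Longrightarrow> c k \<in> l2"
  shows "(\<lambda>t. \<Sum>k\<in>F. a k * c k t) \<in> l2"
  using assms
proof (induction F rule: finite_induct)
  case empty then show ?case by (simp add: l2_zero)
next
  case (insert x F)
  have "(\<lambda>t. a x * c x t + (\<Sum>k\<in>F. a k * c k t)) \<in> l2"
    using insert by (intro l2_add l2_scale) auto
  thus ?case using insert by simp
qed

lemma delta_l2: "delta i \<in> l2"
proof -
  have "(\<lambda>j. (cmod (delta i j))^2) summable_on UNIV"
    by (rule finite_nonzero_values_imp_summable_on) (auto simp: delta_def)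
  thus ?thesis by (simp add: l2_def)
qed

lemma inner_abs_summable: assumes "f \<in> l2" "g \<in> l2"
  shows "(\<lambda>i. norm (f i * cnj (g i))) summable_on UNIV"
proof -
  have s: "(\<lambda>i. (cmod (f i))^2 + (cmod (g i))^2) summable_on UNIV"
    using assms by (intro summable_on_add) (auto simp: l2_def)
  have eqn: "(\<lambda>i. norm ((cmod (f i))^2 + (cmod (g i))^2)) = (\<lambda>i. (cmod (f i))^2 + (cmod (g i))^2)"
    by simp
  have s': "(\<lambda>i. norm ((cmod (f i))^2 + (cmod (g i))^2)) summable_on UNIV"
    using s by (simp only: eqn)
  have le: "norm (f i * cnj (g i)) \<le> norm ((cmod (f i))^2 + (cmod (g i))^2)" for i
  proof -
    have "cmod (f i) * cmod (g i) \<le> (cmod (f i))^2 + (cmod (g i))^2"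
    proof -
      have "0 \<le> (cmod (f i) - cmod (g i))^2" by simp
      moreover have "(cmod (f i) - cmod (g i))^2 = (cmod (f i))^2 + (cmod (g i))^2 - 2 * (cmod (f i) * cmod (g i))"
        by (simp add: power2_diff)
      moreover have "0 \<le> cmod (f i) * cmod (g i)" by simp
      ultimately show ?thesis by linarith
    qed
    moreover have "norm (f i * cnj (g i)) = cmod (f i) * cmod (g i)" by (simp add: norm_mult)
    moreover have "norm ((cmod (f i))^2 + (cmod (g i))^2) = (cmod (f i))^2 + (cmod (g i))^2" by simp
    ultimately show ?thesis by simp
  qed
  show ?thesis by (rule Infinite_Sum.abs_summable_on_comparison_test[OF s']) (rule le)
qed

lemma inner_summable: "f \<in> l2 \<Longrightarrow> g \<in> l2 \<Longrightarrow> (\<lambda>i. f i * cnj (g i)) summable_on UNIV"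
  by (rule abs_summable_summable[OF inner_abs_summable])

lemma inner_has_sum: "f \<in> l2 \<Longrightarrow> g \<in> l2 \<Longrightarrow> ((\<lambda>i. f i * cnj (g i)) has_sum l2inner f g) UNIV"
  unfolding l2inner_def using inner_summable has_sum_infsum by blast

lemma inner_cnj: "l2inner g f = cnj (l2inner f g)"
  unfolding l2inner_def by (subst infsum_cnj[symmetric]) (simp add: mult.commute)

lemma inner_add_left: assumes "f \<in> l2" "g \<in> l2" "h \<in> l2"
  shows "l2inner (\<lambda>i. f i + g i) h = l2inner f h + l2inner g h"
  unfolding l2inner_def
  by (simp add: distrib_right infsum_add inner_summable assms)

lemma inner_scale_left: "l2inner (\<lambda>i. c * f i) h = c * l2inner f h"
  unfolding l2inner_def by (simp add: mult.assoc infsum_cmult_right')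

lemma inner_scale_right: "l2inner h (\<lambda>i. c * f i) = cnj c * l2inner h f"
proof -
  have "l2inner h (\<lambda>i. c * f i) = cnj (l2inner (\<lambda>i. c * f i) h)" by (rule inner_cnj)
  also have "\<dots> = cnj (c * l2inner f h)" by (simp only: inner_scale_left)
  also have "\<dots> = cnj c * cnj (l2inner f h)" by simp
  also have "cnj (l2inner f h) = l2inner h f" by (rule inner_cnj[symmetric])
  finally show ?thesis .
qed

lemma inner_add_right: assumes "f \<in> l2" "g \<in> l2" "h \<in> l2"
  shows "l2inner h (\<lambda>i. f i + g i) = l2inner h f + l2inner h g"
proof -
  have "l2inner h (\<lambda>i. f i + g i) = cnj (l2inner (\<lambda>i. f i + g i) h)" by (rule inner_cnj)
  also have "\<dots> = cnj (l2inner f h + l2inner g h)" by (simp only: inner_add_left[OF assms])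
  also have "\<dots> = cnj (l2inner f h) + cnj (l2inner g h)" by simp
  also have "cnj (l2inner f h) = l2inner h f" by (rule inner_cnj[symmetric])
  also have "cnj (l2inner g h) = l2inner h g" by (rule inner_cnj[symmetric])
  finally show ?thesis .
qed

lemma inner_diff_left: assumes "f \<in> l2" "g \<in> l2" "h \<in> l2"
  shows "l2inner (\<lambda>i. f i - g i) h = l2inner f h - l2inner g h"
proof -
  have "l2inner (\<lambda>i. f i + (-1) * g i) h = l2inner f h + l2inner (\<lambda>i. (-1) * g i) h"
    using assms by (intro inner_add_left l2_scale)
  moreover have "l2inner (\<lambda>i. (-1) * g i) h = (-1) * l2inner g h" by (rule inner_scale_left)
  moreover have "(\<lambda>i. f i + (-1) * g i) = (\<lambda>i. f i - g i)" by simp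
  ultimately show ?thesis by (simp only:) simp
qed

lemma inner_diff_right: assumes "f \<in> l2" "g \<in> l2" "h \<in> l2"
  shows "l2inner h (\<lambda>i. f i - g i) = l2inner h f - l2inner h g"
proof -
  have "l2inner h (\<lambda>i. f i - g i) = cnj (l2inner (\<lambda>i. f i - g i) h)" by (rule inner_cnj)
  also have "\<dots> = cnj (l2inner f h - l2inner g h)" by (simp only: inner_diff_left[OF assms])
  also have "\<dots> = cnj (l2inner f h) - cnj (l2inner g h)" by simp
  also have "cnj (l2inner f h) = l2inner h f" by (rule inner_cnj[symmetric])
  also have "cnj (l2inner g h) = l2inner h g" by (rule inner_cnj[symmetric])
  finally show ?thesis .
qed

lemma inner_delta_right: "l2inner f (delta i) = f i"
proof -
  have "((\<lambda>j. f j * cnj (delta i j)) has_sum f i) UNIV"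
    by (rule has_sum_finite_neutralI[of "{i}"]) (auto simp: delta_def)
  thus ?thesis unfolding l2inner_def by (simp add: infsumI)
qed

lemma inner_delta_left: "l2inner (delta i) f = cnj (f i)"
  by (subst inner_cnj) (simp only: inner_delta_right)

lemma inner_self: assumes "f \<in> l2"
  shows "l2inner f f = of_real (\<Sum>\<^sub>\<infinity>i. (cmod (f i))^2)"
proof -
  have "((\<lambda>i. (cmod (f i))^2) has_sum (\<Sum>\<^sub>\<infinity>i. (cmod (f i))^2)) UNIV"
    using assms by (simp add: l2_def)
  hence "((\<lambda>i. of_real ((cmod (f i))^2) :: complex) has_sum of_real (\<Sum>\<^sub>\<infinity>i. (cmod (f i))^2)) UNIV"
    by (rule has_sum_of_real)
  moreover have eq: "\<And>i. f i * cnj (f i) = of_real ((cmod (f i))^2)"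
    by (metis complex_norm_square)
  ultimately have "((\<lambda>i. f i * cnj (f i)) has_sum of_real (\<Sum>\<^sub>\<infinity>i. (cmod (f i))^2)) UNIV"
    by (simp only: eq)
  thus ?thesis unfolding l2inner_def by (simp add: infsumI)
qed

lemma l2norm_sq: assumes "f \<in> l2" shows "l2inner f f = of_real ((l2norm f)^2)"
proof -
  have "(\<Sum>\<^sub>\<infinity>i. (cmod (f i))^2) \<ge> 0" by (auto intro!: infsum_nonneg)
  thus ?thesis using inner_self[OF assms] by (simp add: l2norm_def)
qed

lemma l2norm_nonneg: "l2norm f \<ge> 0" unfolding l2norm_def by (auto intro!: infsum_nonneg)

lemma inner_self_zero: assumes "f \<in> l2" "l2inner f f = 0" shows "f = (\<lambda>i. 0)"
proof
  fix i
  have "(\<Sum>\<^sub>\<infinity>i. (cmod (f i))^2) = 0" using inner_self[OF assms(1)] assms(2) by simp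
  hence "(cmod (f i))^2 = 0"
    by (intro nonneg_infsum_le_0D[where A=UNIV]) (use assms(1) in \<open>auto simp: l2_def\<close>)
  thus "f i = 0" by simp
qed



lemma cs_aux: assumes "f \<in> l2" "g \<in> l2" "t > 0"
  shows "cmod (l2inner f g) \<le> (t/2) * (\<Sum>\<^sub>\<infinity>i. (cmod (f i))^2) + (1/(2*t)) * (\<Sum>\<^sub>\<infinity>i. (cmod (g i))^2)"
proof -
  have sf: "(\<lambda>i. (cmod (f i))^2) summable_on UNIV" and sg: "(\<lambda>i. (cmod (g i))^2) summable_on UNIV"
    using assms by (auto simp: l2_def)
  have "cmod (l2inner f g) \<le> (\<Sum>\<^sub>\<infinity>i. norm (f i * cnj (g i)))"
    unfolding l2inner_def by (rule norm_infsum_bound) (rule inner_abs_summable[OF assms(1,2)])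
  also have "\<dots> \<le> (\<Sum>\<^sub>\<infinity>i. (t/2) * (cmod (f i))^2 + (1/(2*t)) * (cmod (g i))^2)"
  proof (rule infsum_mono)
    show "(\<lambda>i. norm (f i * cnj (g i))) summable_on UNIV" by (rule inner_abs_summable[OF assms(1,2)])
    show "(\<lambda>i. (t/2) * (cmod (f i))^2 + (1/(2*t)) * (cmod (g i))^2) summable_on UNIV"
      using sf sg by (intro summable_on_add summable_on_cmult_right) auto
    fix i
    have "0 \<le> (t * cmod (f i) - cmod (g i))^2 / (2*t)" using assms(3) by simp
    moreover have "(t * cmod (f i) - cmod (g i))^2 / (2*t) = (t/2) * (cmod (f i))^2 + (1/(2*t)) * (cmod (g i))^2 - (cmod (f i) * cmod (g i))"
      using assms(3) by (simp add: power2_diff field_simps power2_eq_square)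
    moreover have "norm (f i * cnj (g i)) = cmod (f i) * cmod (g i)" by (simp add: norm_mult)
    ultimately show "norm (f i * cnj (g i)) \<le> (t/2) * (cmod (f i))^2 + (1/(2*t)) * (cmod (g i))^2" by linarith
  qed
  also have "\<dots> = (\<Sum>\<^sub>\<infinity>i. (t/2) * (cmod (f i))^2) + (\<Sum>\<^sub>\<infinity>i. (1/(2*t)) * (cmod (g i))^2)"
    by (intro infsum_add summable_on_cmult_right sf sg)
  also have "\<dots> = (t/2) * (\<Sum>\<^sub>\<infinity>i. (cmod (f i))^2) + (1/(2*t)) * (\<Sum>\<^sub>\<infinity>i. (cmod (g i))^2)"
    by (simp only: infsum_cmult_right')
  finally show ?thesis .
qed

lemma cauchy_schwarz: assumes "f \<in> l2" "g \<in> l2"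
  shows "cmod (l2inner f g) \<le> l2norm f * l2norm g"
proof -
  define A where "A = (\<Sum>\<^sub>\<infinity>i. (cmod (f i))^2)"
  define B where "B = (\<Sum>\<^sub>\<infinity>i. (cmod (g i))^2)"
  have A0: "A \<ge> 0" "B \<ge> 0" unfolding A_def B_def by (auto intro!: infsum_nonneg)
  show ?thesis
  proof (cases "A = 0 \<or> B = 0")
    case True
    then show ?thesis
    proof
      assume "A = 0"
      hence "l2inner f f = 0" using inner_self[OF assms(1)] by (simp add: A_def)
      hence "f = (\<lambda>i. 0)" using inner_self_zero assms by blast
      thus ?thesis by (simp add: l2inner_def l2norm_def)
    next
      assume "B = 0"
      hence "l2inner g g = 0" using inner_self[OF assms(2)] by (simp add: B_def)
      hence "g = (\<lambda>i. 0)" using inner_self_zero assms by blast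
      thus ?thesis by (simp add: l2inner_def l2norm_def)
    qed
  next
    case False
    hence pos: "A > 0" "B > 0" using A0 by auto
    define t where "t = sqrt B / sqrt A"
    have t: "t > 0" using pos by (simp add: t_def)
    have "cmod (l2inner f g) \<le> (t/2) * A + (1/(2*t)) * B"
      using cs_aux[OF assms t] by (simp add: A_def B_def)
    also have "\<dots> = sqrt A * sqrt B"
    proof -
      have "(t/2) * A = sqrt A * sqrt B / 2" using pos
        by (simp add: t_def field_simps)
      moreover have "(1/(2*t)) * B = sqrt A * sqrt B / 2" using pos
        by (simp add: t_def field_simps)
      ultimately show ?thesis by simp
    qed
    finally show ?thesis by (simp add: l2norm_def A_def B_def)
  qed
qed


lemma bop_l2: "bounded_op X \<Longrightarrow> f \<in> l2 \<Longrightarrow> X f \<in> l2"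
  by (simp add: bounded_op_def)

lemma bop_add: "bounded_op X \<Longrightarrow> f \<in> l2 \<Longrightarrow> g \<in> l2 \<Longrightarrow> X (\<lambda>i. f i + g i) = (\<lambda>i. X f i + X g i)"
  by (simp add: bounded_op_def)

lemma bop_scale: "bounded_op X \<Longrightarrow> f \<in> l2 \<Longrightarrow> X (\<lambda>i. c * f i) = (\<lambda>i. c * X f i)"
  by (simp add: bounded_op_def)

lemma bop_bound: "bounded_op X \<Longrightarrow> \<exists>C. \<forall>f\<in>l2. l2norm (X f) \<le> C * l2norm f"
  by (simp add: bounded_op_def)

lemma bop_lin2: assumes "bounded_op X" "u \<in> l2" "d \<in> l2"
  shows "X (\<lambda>t. u t - p * d t) = (\<lambda>t. X u t - p * X d t)"
proof -
  have "X (\<lambda>t. u t + (- p) * d t) = (\<lambda>t. X u t + X (\<lambda>t. (- p) * d t) t)"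
    using assms by (intro bop_add l2_scale)
  also have "X (\<lambda>t. (- p) * d t) = (\<lambda>t. (- p) * X d t)" using assms by (intro bop_scale)
  finally show ?thesis by simp
qed

lemma bop_diff: assumes "bounded_op X" "u \<in> l2" "d \<in> l2"
  shows "X (\<lambda>t. u t - d t) = (\<lambda>t. X u t - X d t)"
  using bop_lin2[OF assms, of 1] by simp

lemma bop_zero: assumes "bounded_op X" shows "X (\<lambda>t. 0) = (\<lambda>t. 0)"
  using bop_scale[OF assms l2_zero, of 0] by simp

lemma bop_sum: assumes "bounded_op X" "finite F" "\<And>k. k \<in> F \<Longrightarrow> c k \<in> l2"
  shows "X (\<lambda>t. \<Sum>k\<in>F. a k * c k t) = (\<lambda>t. \<Sum>k\<in>F. a k * X (c k) t)"
  using assms(2,3)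
proof (induction F rule: finite_induct)
  case empty then show ?case by (simp add: bop_zero[OF assms(1)])
next
  case (insert x F)
  have l: "(\<lambda>t. \<Sum>k\<in>F. a k * c k t) \<in> l2" using insert by (intro l2_sum) auto
  have "X (\<lambda>t. \<Sum>k\<in>insert x F. a k * c k t) = X (\<lambda>t. a x * c x t + (\<Sum>k\<in>F. a k * c k t))"
    using insert by simp
  also have "\<dots> = (\<lambda>t. X (\<lambda>t. a x * c x t) t + X (\<lambda>t. \<Sum>k\<in>F. a k * c k t) t)"
    using insert l by (intro bop_add[OF assms(1)] l2_scale) auto
  also have "\<dots> = (\<lambda>t. a x * X (c x) t + (\<Sum>k\<in>F. a k * X (c k) t))"
    using insert by (simp add: bop_scale[OF assms(1)])
  finally show ?case using insert by simp
qed

lemma inner_sum_left: assumes "finite F" "\<And>k. k \<in> F \<Longrightarrow> c k \<in> l2" "w \<in> l2"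
  shows "l2inner (\<lambda>t. \<Sum>k\<in>F. a k * c k t) w = (\<Sum>k\<in>F. a k * l2inner (c k) w)"
  using assms(1,2)
proof (induction F rule: finite_induct)
  case empty then show ?case by (simp add: l2inner_def)
next
  case (insert x F)
  have l: "(\<lambda>t. \<Sum>k\<in>F. a k * c k t) \<in> l2" using insert by (intro l2_sum) auto
  have "l2inner (\<lambda>t. \<Sum>k\<in>insert x F. a k * c k t) w = l2inner (\<lambda>t. a x * c x t + (\<Sum>k\<in>F. a k * c k t)) w"
    using insert by simp
  also have "\<dots> = l2inner (\<lambda>t. a x * c x t) w + l2inner (\<lambda>t. \<Sum>k\<in>F. a k * c k t) w"
    using insert l assms(3) by (intro inner_add_left l2_scale) auto
  also have "\<dots> = a x * l2inner (c x) w + (\<Sum>k\<in>F. a k * l2inner (c k) w)"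
    using insert by (simp add: inner_scale_left)
  finally show ?case using insert by simp
qed

lemma inner_sum_right: assumes "finite F" "\<And>k. k \<in> F \<Longrightarrow> c k \<in> l2" "w \<in> l2"
  shows "l2inner w (\<lambda>t. \<Sum>k\<in>F. a k * c k t) = (\<Sum>k\<in>F. cnj (a k) * l2inner w (c k))"
proof -
  have "l2inner w (\<lambda>t. \<Sum>k\<in>F. a k * c k t) = cnj (l2inner (\<lambda>t. \<Sum>k\<in>F. a k * c k t) w)"
    by (rule inner_cnj)
  also have "\<dots> = cnj (\<Sum>k\<in>F. a k * l2inner (c k) w)" using inner_sum_left[OF assms] by simp
  also have "\<dots> = (\<Sum>k\<in>F. cnj (a k) * cnj (l2inner (c k) w))" by simp
  also have "\<dots> = (\<Sum>k\<in>F. cnj (a k) * l2inner w (c k))"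
    by (rule sum.cong) (auto simp: inner_cnj[of w])
  finally show ?thesis .
qed


section \<open>Orthonormal bases\<close>

definition onb :: "('i \<Rightarrow> ('i \<Rightarrow> complex)) \<Rightarrow> bool" where
  "onb c \<longleftrightarrow> (\<forall>i. c i \<in> l2) \<and> (\<forall>i j. l2inner (c i) (c j) = (if i = j then 1 else 0)) \<and>
     (\<forall>u\<in>l2. \<forall>w\<in>l2. ((\<lambda>i. l2inner u (c i) * l2inner (c i) w) has_sum l2inner u w) UNIV)"

lemma onb_l2: "onb c \<Longrightarrow> c i \<in> l2" by (simp add: onb_def)
lemma onb_on: "onb c \<Longrightarrow> l2inner (c i) (c j) = (if i = j then 1 else 0)" by (simp add: onb_def)
lemma onb_pars: "onb c \<Longrightarrow> u \<in> l2 \<Longrightarrow> w \<in> l2 \<Longrightarrow>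
   ((\<lambda>i. l2inner u (c i) * l2inner (c i) w) has_sum l2inner u w) UNIV" by (simp add: onb_def)

lemma expansion: assumes c: "onb c" and X: "bounded_op X" and v: "v \<in> l2" and w: "w \<in> l2"
  shows "((\<lambda>i. l2inner v (c i) * l2inner (X (c i)) w) has_sum l2inner (X v) w) UNIV"
proof -
  define a where "a i = l2inner v (c i)" for i
  define S where "S F = (\<lambda>t. \<Sum>k\<in>F. a k * c k t)" for F
  have cl2: "c i \<in> l2" for i using c by (rule onb_l2)
  have SL: "finite F \<Longrightarrow> S F \<in> l2" for F unfolding S_def by (rule l2_sum) (auto simp: cl2)
  have sumeq: "(\<Sum>i\<in>F. a i * l2inner (X (c i)) w) = l2inner (X (S F)) w" if F: "finite F" for F
  proof -
    have "X (S F) = (\<lambda>t. \<Sum>k\<in>F. a k * X (c k) t)" unfolding S_def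
      by (rule bop_sum[OF X F]) (simp add: cl2)
    moreover have "l2inner (\<lambda>t. \<Sum>k\<in>F. a k * X (c k) t) w = (\<Sum>k\<in>F. a k * l2inner (X (c k)) w)"
      by (rule inner_sum_left[OF F _ w]) (simp add: bop_l2[OF X] cl2)
    ultimately show ?thesis by simp
  qed
  have cv: "l2inner (c i) v = cnj (a i)" for i unfolding a_def by (rule inner_cnj)
  have Pv: "((\<lambda>i. a i * cnj (a i)) has_sum l2inner v v) UNIV"
    using onb_pars[OF c v v] by (simp add: cv a_def)
  have ck: "l2inner (c k) (S F) = cnj (a k)" if F: "finite F" "k \<in> F" for F k
  proof -
    have "l2inner (c k) (S F) = (\<Sum>j\<in>F. cnj (a j) * l2inner (c k) (c j))"
      unfolding S_def by (rule inner_sum_right[OF F(1) _ cl2]) (simp add: cl2)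
    also have "\<dots> = (\<Sum>j\<in>F. (if k = j then cnj (a j) else 0))"
      by (rule sum.cong) (auto simp: onb_on[OF c])
    also have "\<dots> = cnj (a k)" using F by simp
    finally show ?thesis .
  qed
  have SS: "l2inner (S F) (S F) = (\<Sum>i\<in>F. a i * cnj (a i))" if F: "finite F" for F
  proof -
    have "l2inner (S F) (S F) = (\<Sum>k\<in>F. a k * l2inner (c k) (S F))"
      unfolding S_def[of F] by (rule inner_sum_left[OF F _ ]) (auto simp: cl2 SL[OF F, unfolded S_def])
    also have "\<dots> = (\<Sum>k\<in>F. a k * cnj (a k))" by (rule sum.cong) (auto simp: ck[OF F])
    finally show ?thesis .
  qed
  have Sv: "l2inner (S F) v = (\<Sum>i\<in>F. a i * cnj (a i))" if F: "finite F" for F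
    unfolding S_def by (subst inner_sum_left[OF F _ v]) (auto simp: cl2 cv)
  have vS: "l2inner v (S F) = (\<Sum>i\<in>F. a i * cnj (a i))" if F: "finite F" for F
    unfolding S_def by (subst inner_sum_right[OF F _ v]) (auto simp: cl2 a_def mult.commute)
  define e where "e F = l2inner v v - (\<Sum>i\<in>F. a i * cnj (a i))" for F
  have nrm: "l2inner (\<lambda>t. S F t - v t) (\<lambda>t. S F t - v t) = e F" if F: "finite F" for F
  proof -
    have "l2inner (\<lambda>t. S F t - v t) (\<lambda>t. S F t - v t)
        = l2inner (S F) (\<lambda>t. S F t - v t) - l2inner v (\<lambda>t. S F t - v t)"
      using SL[OF F] v by (intro inner_diff_left l2_diff)
    also have "\<dots> = (l2inner (S F) (S F) - l2inner (S F) v) - (l2inner v (S F) - l2inner v v)"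
      using SL[OF F] v by (simp add: inner_diff_right)
    finally show ?thesis using SS[OF F] Sv[OF F] vS[OF F] by (simp add: e_def)
  qed
  obtain C where C: "\<forall>f\<in>l2. l2norm (X f) \<le> C * l2norm f" using bop_bound[OF X] by blast
  have bound: "cmod ((\<Sum>i\<in>F. a i * l2inner (X (c i)) w) - l2inner (X v) w) \<le> C * sqrt (cmod (e F)) * l2norm w"
    if F: "finite F" for F
  proof -
    define d where "d = (\<lambda>t. S F t - v t)"
    have dl2: "d \<in> l2" unfolding d_def using SL[OF F] v by (rule l2_diff)
    have "(\<Sum>i\<in>F. a i * l2inner (X (c i)) w) - l2inner (X v) w = l2inner (X (S F)) w - l2inner (X v) w"
      by (simp add: sumeq[OF F])
    also have "\<dots> = l2inner (\<lambda>t. X (S F) t - X v t) w"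
      using SL[OF F] v w X by (simp add: inner_diff_left bop_l2)
    also have "(\<lambda>t. X (S F) t - X v t) = X d" unfolding d_def using SL[OF F] v X by (simp add: bop_diff)
    finally have eq: "(\<Sum>i\<in>F. a i * l2inner (X (c i)) w) - l2inner (X v) w = l2inner (X d) w" .
    have "cmod (l2inner (X d) w) \<le> l2norm (X d) * l2norm w"
      by (rule cauchy_schwarz) (use dl2 X w in \<open>auto simp: bop_l2\<close>)
    also have "\<dots> \<le> (C * l2norm d) * l2norm w"
      using C dl2 by (intro mult_right_mono) (auto simp: l2norm_nonneg)
    also have "l2norm d = sqrt (cmod (e F))"
    proof -
      have "of_real ((l2norm d)^2) = e F" using l2norm_sq[OF dl2] nrm[OF F] by (simp add: d_def)
      hence "cmod (e F) = (l2norm d)^2" by (metis norm_of_real abs_power2 power2_abs)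
      thus ?thesis by (simp add: l2norm_nonneg)
    qed
    finally show ?thesis using eq by simp
  qed
  have e0: "(e \<longlongrightarrow> 0) (finite_subsets_at_top UNIV)"
  proof -
    have "(sum (\<lambda>i. a i * cnj (a i)) \<longlongrightarrow> l2inner v v) (finite_subsets_at_top UNIV)"
      using Pv by (simp add: has_sum_def)
    hence "((\<lambda>F. l2inner v v - sum (\<lambda>i. a i * cnj (a i)) F) \<longlongrightarrow> l2inner v v - l2inner v v) (finite_subsets_at_top UNIV)"
      by (intro tendsto_diff tendsto_const)
    thus ?thesis by (simp add: e_def[abs_def])
  qed
  have g0: "((\<lambda>F. C * sqrt (cmod (e F)) * l2norm w) \<longlongrightarrow> 0) (finite_subsets_at_top UNIV)"
  proof -
    have "((\<lambda>F. C * sqrt (cmod (e F)) * l2norm w) \<longlongrightarrow> C * sqrt (cmod 0) * l2norm w) (finite_subsets_at_top UNIV)"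
      by (intro tendsto_intros e0)
    thus ?thesis by simp
  qed
  have "((\<lambda>F. (\<Sum>i\<in>F. a i * l2inner (X (c i)) w) - l2inner (X v) w) \<longlongrightarrow> 0) (finite_subsets_at_top UNIV)"
  proof (rule Lim_null_comparison[OF _ g0])
    show "\<forall>\<^sub>F F in finite_subsets_at_top UNIV. norm ((\<Sum>i\<in>F. a i * l2inner (X (c i)) w) - l2inner (X v) w) \<le> C * sqrt (cmod (e F)) * l2norm w"
      by (rule eventually_finite_subsets_at_top_weakI) (rule bound)
  qed
  hence "((\<lambda>F. (\<Sum>i\<in>F. a i * l2inner (X (c i)) w)) \<longlongrightarrow> l2inner (X v) w) (finite_subsets_at_top UNIV)"
    by (rule LIM_zero_cancel)
  thus ?thesis by (simp add: has_sum_def a_def)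
qed


section \<open>Traces with respect to bases\<close>

definition trc :: "('i \<Rightarrow> ('i \<Rightarrow> complex)) \<Rightarrow> (('i \<Rightarrow> complex) \<Rightarrow> ('i \<Rightarrow> complex)) \<Rightarrow> complex" where
  "trc c X = (\<Sum>\<^sub>\<infinity>i. l2inner (X (c i)) (c i))"

definition dbound :: "(('i \<Rightarrow> complex) \<Rightarrow> ('i \<Rightarrow> complex)) \<Rightarrow> real \<Rightarrow> bool" where
  "dbound X C \<longleftrightarrow> (\<forall>n e. orthonormal_fam n e \<longrightarrow> (\<Sum>k<n. cmod (l2inner (X (e k)) (e k))) \<le> C)"

lemma enum_fam: fixes c :: "'j \<Rightarrow> ('i \<Rightarrow> complex)" and F :: "'j set"
  assumes "finite F" "\<And>i. i \<in> F \<Longrightarrow> c i \<in> l2"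
    "\<And>i j. i \<in> F \<Longrightarrow> j \<in> F \<Longrightarrow> l2inner (c i) (c j) = (if i = j then 1 else 0)"
  obtains h where "bij_betw h {..<card F} F" "orthonormal_fam (card F) (\<lambda>k. c (h k))"
proof -
  obtain h where h: "bij_betw h {0..<card F} F" using ex_bij_betw_nat_finite[OF assms(1)] by blast
  hence h': "bij_betw h {..<card F} F" by (simp add: atLeast0LessThan)
  have "orthonormal_fam (card F) (\<lambda>k. c (h k))"
    unfolding orthonormal_fam_def
  proof (intro conjI allI impI)
    fix k assume "k < card F"
    hence "h k \<in> F" using h' bij_betwE by blast
    thus "c (h k) \<in> l2" by (rule assms(2))
  next
    fix k l assume k: "k < card F" and l: "l < card F"
    hence F: "h k \<in> F" "h l \<in> F" using h' bij_betwE by blast+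
    have "(h k = h l) = (k = l)" using h' k l unfolding bij_betw_def inj_on_def by auto
    thus "l2inner (c (h k)) (c (h l)) = (if k = l then 1 else 0)" using assms(3)[OF F] by simp
  qed
  thus ?thesis using that h' by blast
qed

lemma diag_summable: fixes c :: "'i \<Rightarrow> ('i \<Rightarrow> complex)"
  assumes c: "onb c" and db: "dbound X C"
  shows "(\<lambda>i. l2inner (X (c i)) (c i)) summable_on UNIV"
proof -
  have "(\<lambda>i. norm (l2inner (X (c i)) (c i))) summable_on UNIV"
    unfolding Infinite_Sum.abs_summable_iff_bdd_above
  proof (rule bdd_aboveI2)
    fix F assume "F \<in> {F. F \<subseteq> (UNIV :: 'i set) \<and> finite F}"
    hence F: "finite F" by simp
    obtain h where h: "bij_betw h {..<card F} F" "orthonormal_fam (card F) (\<lambda>k. c (h k))"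
      using enum_fam[OF F, of c] onb_l2[OF c] onb_on[OF c] by metis
    have "(\<Sum>i\<in>F. norm (l2inner (X (c i)) (c i))) = (\<Sum>k<card F. cmod (l2inner (X (c (h k))) (c (h k))))"
      using sum.reindex_bij_betw[OF h(1), of "\<lambda>i. norm (l2inner (X (c i)) (c i))"] by simp
    also have "\<dots> \<le> C" using db h(2) by (simp add: dbound_def)
    finally show "(\<Sum>i\<in>F. norm (l2inner (X (c i)) (c i))) \<le> C" .
  qed
  thus ?thesis using summable_on_iff_abs_summable_on_complex by blast
qed

lemma theta_unit: "cmod \<theta> = 1 \<Longrightarrow> \<theta> * cnj \<theta> = 1"
  by (metis complex_norm_square of_real_1 power_one)

lemma theta_unit': "cmod \<theta> = 1 \<Longrightarrow> cnj \<theta> * \<theta> = 1"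
  using theta_unit by (simp add: mult.commute)

lemma phase_onb: assumes c: "onb c" and th: "cmod \<theta> = 1"
  shows "onb (c(j := (\<lambda>t. \<theta> * c j t)))"
proof -
  let ?c = "c(j := (\<lambda>t. \<theta> * c j t))"
  have l2: "?c i \<in> l2" for i using onb_l2[OF c] by (auto intro: l2_scale)
  have on: "l2inner (?c i) (?c k) = (if i = k then 1 else 0)" for i k
    using onb_on[OF c] theta_unit[OF th]
    by (auto simp: inner_scale_left inner_scale_right)
  have pars: "((\<lambda>i. l2inner u (?c i) * l2inner (?c i) w) has_sum l2inner u w) UNIV"
    if "u \<in> l2" "w \<in> l2" for u w
  proof -
    have "l2inner u (?c i) * l2inner (?c i) w = l2inner u (c i) * l2inner (c i) w" for i
    proof (cases "i = j")
      case True
      have "l2inner u (?c i) * l2inner (?c i) w = (cnj \<theta> * \<theta>) * (l2inner u (c i) * l2inner (c i) w)"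
        using True by (simp add: inner_scale_left inner_scale_right algebra_simps)
      thus ?thesis using theta_unit'[OF th] by simp
    qed simp
    thus ?thesis using onb_pars[OF c that] by simp
  qed
  show ?thesis unfolding onb_def using l2 on pars by blast
qed

lemma phase_trc: assumes c: "onb c" and th: "cmod \<theta> = 1" and X: "bounded_op X"
  shows "trc (c(j := (\<lambda>t. \<theta> * c j t))) X = trc c X"
proof -
  have "l2inner (X ((c(j := (\<lambda>t. \<theta> * c j t))) i)) ((c(j := (\<lambda>t. \<theta> * c j t))) i) = l2inner (X (c i)) (c i)" for i
  proof (cases "i = j")
    case True
    have "l2inner (X (\<lambda>t. \<theta> * c j t)) (\<lambda>t. \<theta> * c j t) = (\<theta> * cnj \<theta>) * l2inner (X (c j)) (c j)"
      using bop_scale[OF X onb_l2[OF c]] by (simp add: inner_scale_left inner_scale_right algebra_simps)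
    thus ?thesis using True theta_unit[OF th] by simp
  qed simp
  thus ?thesis unfolding trc_def by simp
qed

section \<open>Householder reflections\<close>

lemma inner_expand: assumes "u \<in> l2" "w \<in> l2" "d \<in> l2" "e \<in> l2"
  shows "l2inner (\<lambda>t. u t - p * d t) (\<lambda>t. w t - q * e t)
       = l2inner u w - cnj q * l2inner u e - p * l2inner d w + p * cnj q * l2inner d e"
proof -
  have sd: "(\<lambda>t. p * d t) \<in> l2" "(\<lambda>t. q * e t) \<in> l2" using assms by (auto intro: l2_scale)
  have w': "(\<lambda>t. w t - q * e t) \<in> l2" using assms sd by (intro l2_diff)
  have "l2inner (\<lambda>t. u t - p * d t) (\<lambda>t. w t - q * e t)
      = l2inner u (\<lambda>t. w t - q * e t) - l2inner (\<lambda>t. p * d t) (\<lambda>t. w t - q * e t)"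
    using assms sd w' by (intro inner_diff_left)
  also have "\<dots> = (l2inner u w - l2inner u (\<lambda>t. q * e t)) - p * (l2inner d w - l2inner d (\<lambda>t. q * e t))"
    using assms sd by (simp add: inner_diff_right inner_scale_left)
  also have "\<dots> = l2inner u w - cnj q * l2inner u e - p * l2inner d w + p * cnj q * l2inner d e"
    by (simp add: inner_scale_right algebra_simps)
  finally show ?thesis .
qed

definition hh :: "('i \<Rightarrow> complex) \<Rightarrow> ('i \<Rightarrow> complex) \<Rightarrow> ('i \<Rightarrow> complex)" where
  "hh d u = (\<lambda>t. u t - ((2 / l2inner d d) * l2inner u d) * d t)"

lemma hh_l2: "d \<in> l2 \<Longrightarrow> u \<in> l2 \<Longrightarrow> hh d u \<in> l2"
  unfolding hh_def by (intro l2_diff l2_scale)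

lemma DD_real: "cnj (l2inner d d) = l2inner d d"
  by (metis inner_cnj)

lemma hh_inner: assumes d: "d \<in> l2" "l2inner d d \<noteq> 0" and u: "u \<in> l2" and w: "w \<in> l2"
  shows "l2inner (hh d u) (hh d w) = l2inner u w"
proof -
  define D where "D = l2inner d d"
  define \<kappa> where "\<kappa> = 2 / D"
  have kD: "\<kappa> * D = 2" using d by (simp add: \<kappa>_def D_def)
  have ck: "cnj \<kappa> = \<kappa>" unfolding \<kappa>_def D_def by (simp add: DD_real)
  have dw: "cnj (l2inner w d) = l2inner d w" by (metis inner_cnj)
  have "l2inner (hh d u) (hh d w) = l2inner u w - cnj (\<kappa> * l2inner w d) * l2inner u d
      - (\<kappa> * l2inner u d) * l2inner d w + (\<kappa> * l2inner u d) * cnj (\<kappa> * l2inner w d) * D"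
    unfolding hh_def \<kappa>_def D_def using d u w by (intro inner_expand)
  also have "\<dots> = l2inner u w - 2 * \<kappa> * (l2inner u d * l2inner d w) + (\<kappa> * D) * \<kappa> * (l2inner u d * l2inner d w)"
    by (simp add: ck dw algebra_simps)
  also have "\<dots> = l2inner u w" by (simp add: kD)
  finally show ?thesis .
qed

lemma inner_sub_right: assumes "u \<in> l2" "w \<in> l2" "d \<in> l2"
  shows "l2inner u (\<lambda>t. w t - q * d t) = l2inner u w - cnj q * l2inner u d"
  using assms by (simp add: inner_diff_right inner_scale_right l2_scale)

lemma inner_sub_left: assumes "u \<in> l2" "w \<in> l2" "d \<in> l2"
  shows "l2inner (\<lambda>t. w t - q * d t) u = l2inner w u - q * l2inner d u"
  using assms by (simp add: inner_diff_left inner_scale_left l2_scale)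

lemma hh_selfadj: assumes d: "d \<in> l2" and u: "u \<in> l2" and w: "w \<in> l2"
  shows "l2inner u (hh d w) = l2inner (hh d u) w"
proof -
  define \<kappa> where "\<kappa> = 2 / l2inner d d"
  have ck: "cnj \<kappa> = \<kappa>" unfolding \<kappa>_def by (simp add: DD_real)
  have dw: "cnj (l2inner w d) = l2inner d w" by (metis inner_cnj)
  have "l2inner u (hh d w) = l2inner u w - cnj (\<kappa> * l2inner w d) * l2inner u d"
    unfolding hh_def \<kappa>_def[symmetric] by (rule inner_sub_right[OF u w d])
  also have "\<dots> = l2inner u w - (\<kappa> * l2inner u d) * l2inner d w"
    by (simp only: complex_cnj_mult ck dw) (simp add: algebra_simps)
  also have "\<dots> = l2inner (hh d u) w"
    unfolding hh_def \<kappa>_def[symmetric] by (rule inner_sub_left[OF w u d, symmetric])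
  finally show ?thesis .
qed

lemma hh_onb: assumes c: "onb c" and d: "d \<in> l2" "l2inner d d \<noteq> 0"
  shows "onb (\<lambda>i. hh d (c i))"
proof -
  have l2: "hh d (c i) \<in> l2" for i using d onb_l2[OF c] by (simp add: hh_l2)
  have on: "l2inner (hh d (c i)) (hh d (c k)) = (if i = k then 1 else 0)" for i k
    using hh_inner[OF d onb_l2[OF c] onb_l2[OF c]] onb_on[OF c] by simp
  have pars: "((\<lambda>i. l2inner u (hh d (c i)) * l2inner (hh d (c i)) w) has_sum l2inner u w) UNIV"
    if u: "u \<in> l2" and w: "w \<in> l2" for u w
  proof -
    have "l2inner u (hh d (c i)) * l2inner (hh d (c i)) w = l2inner (hh d u) (c i) * l2inner (c i) (hh d w)" for i
      using hh_selfadj[OF d(1) u onb_l2[OF c]] hh_selfadj[OF d(1) onb_l2[OF c] w] by simp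
    moreover have "((\<lambda>i. l2inner (hh d u) (c i) * l2inner (c i) (hh d w)) has_sum l2inner (hh d u) (hh d w)) UNIV"
      using onb_pars[OF c] hh_l2 d u w by blast
    ultimately show ?thesis using hh_inner[OF d u w] by simp
  qed
  show ?thesis unfolding onb_def using l2 on pars by blast
qed


lemma hh_trc: assumes c: "onb c" and X: "bounded_op X" and db: "dbound X C"
    and d: "d \<in> l2" "l2inner d d \<noteq> 0"
  shows "trc (\<lambda>i. hh d (c i)) X = trc c X"
proof -
  define D where "D = l2inner d d"
  define \<kappa> where "\<kappa> = 2 / D"
  have kD: "\<kappa> * D = 2" using d by (simp add: \<kappa>_def D_def)
  have ck: "cnj \<kappa> = \<kappa>" unfolding \<kappa>_def D_def by (simp add: DD_real)
  have cl2: "c i \<in> l2" for i by (rule onb_l2[OF c])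
  have Xd: "X d \<in> l2" using X d by (simp add: bop_l2)
  define A where "A i = l2inner (X (c i)) (c i)" for i
  define B where "B i = l2inner d (c i) * l2inner (X (c i)) d" for i
  define E where "E i = l2inner (X d) (c i) * l2inner (c i) d" for i
  define F where "F i = l2inner d (c i) * l2inner (c i) d" for i
  have trm: "l2inner (X (hh d (c i))) (hh d (c i)) = A i + (- \<kappa>) * B i + (- \<kappa>) * E i + (\<kappa> * \<kappa> * l2inner (X d) d) * F i" for i
  proof -
    define \<alpha> where "\<alpha> = l2inner (c i) d"
    have hc: "hh d (c i) = (\<lambda>t. c i t - (\<kappa> * \<alpha>) * d t)" unfolding hh_def \<kappa>_def D_def \<alpha>_def by simp
    have Xh: "X (hh d (c i)) = (\<lambda>t. X (c i) t - (\<kappa> * \<alpha>) * X d t)"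
      unfolding hc by (rule bop_lin2[OF X cl2 d(1)])
    have "l2inner (X (hh d (c i))) (hh d (c i)) = l2inner (X (c i)) (c i) - cnj (\<kappa> * \<alpha>) * l2inner (X (c i)) d
        - (\<kappa> * \<alpha>) * l2inner (X d) (c i) + (\<kappa> * \<alpha>) * cnj (\<kappa> * \<alpha>) * l2inner (X d) d"
      unfolding Xh unfolding hc by (rule inner_expand) (use X cl2 d Xd in \<open>auto simp: bop_l2\<close>)
    moreover have "cnj \<alpha> = l2inner d (c i)" unfolding \<alpha>_def by (metis inner_cnj)
    ultimately show ?thesis unfolding A_def B_def E_def F_def \<alpha>_def[symmetric]
      by (simp add: ck algebra_simps)
  qed
  have hA: "(A has_sum trc c X) UNIV" unfolding A_def trc_def
    using diag_summable[OF c db] by (simp add: has_sum_infsum)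
  have hB: "(B has_sum l2inner (X d) d) UNIV" unfolding B_def by (rule expansion[OF c X d(1) d(1)])
  have hE: "(E has_sum l2inner (X d) d) UNIV" unfolding E_def by (rule onb_pars[OF c Xd d(1)])
  have hF: "(F has_sum D) UNIV" unfolding F_def D_def by (rule onb_pars[OF c d(1) d(1)])
  have hs: "((\<lambda>i. A i + (- \<kappa>) * B i + (- \<kappa>) * E i + (\<kappa> * \<kappa> * l2inner (X d) d) * F i) has_sum
      (trc c X + (- \<kappa>) * l2inner (X d) d + (- \<kappa>) * l2inner (X d) d + (\<kappa> * \<kappa> * l2inner (X d) d) * D)) UNIV"
    by (intro has_sum_add has_sum_cmult_right hA hB hE hF)
  have veq: "trc c X + (- \<kappa>) * l2inner (X d) d + (- \<kappa>) * l2inner (X d) d + (\<kappa> * \<kappa> * l2inner (X d) d) * D = trc c X"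
  proof -
    have "(\<kappa> * \<kappa> * l2inner (X d) d) * D = (\<kappa> * D) * \<kappa> * l2inner (X d) d" by (simp add: algebra_simps)
    thus ?thesis by (simp add: kD)
  qed
  have "((\<lambda>i. l2inner (X (hh d (c i))) (hh d (c i))) has_sum trc c X) UNIV"
    unfolding trm using hs[unfolded veq] .
  thus ?thesis unfolding trc_def by (simp add: infsumI)
qed


section \<open>Moving a basis onto a given orthonormal family\<close>

lemma exists_nonorth: fixes c :: "'i \<Rightarrow> ('i \<Rightarrow> complex)"
  assumes c: "onb c" and y: "y \<in> l2" "l2inner y y = 1"
  shows "\<exists>j. l2inner (c j) y \<noteq> 0"
proof (rule ccontr)
  assume "\<not> ?thesis"
  hence z: "\<And>j. l2inner (c j) y = 0" by blast
  have "((\<lambda>i. l2inner y (c i) * l2inner (c i) y) has_sum l2inner y y) UNIV" by (rule onb_pars[OF c y(1) y(1)])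
  hence "((\<lambda>i::'i. 0::complex) has_sum 1) UNIV" using y(2) by (simp add: z)
  thus False using has_sum_unique has_sum_0 by fastforce
qed

lemma build_step:
  fixes c :: "'i \<Rightarrow> ('i \<Rightarrow> complex)"
  assumes c: "onb c" and X: "bounded_op X" and db: "dbound X C"
    and y: "y \<in> l2" "l2inner y y = 1"
    and orth: "\<And>l. l \<in> L \<Longrightarrow> l2inner (c l) y = 0"
  shows "\<exists>c2 j. onb c2 \<and> j \<notin> L \<and> c2 j = y \<and> (\<forall>l\<in>L. c2 l = c l) \<and> trc c2 X = trc c X"
proof -
  obtain j where z: "l2inner (c j) y \<noteq> 0" using exists_nonorth[OF c y] by blast
  define z where "z = l2inner (c j) y"
  have jL: "j \<notin> L" using orth z by blast
  define \<theta> where "\<theta> = cnj z / of_real (cmod z)"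
  have zn: "z \<noteq> 0" using z by (simp add: z_def)
  have th: "cmod \<theta> = 1" using zn by (simp add: \<theta>_def norm_divide)
  define x where "x = (\<lambda>t. \<theta> * c j t)"
  define c1 where "c1 = c(j := x)"
  have c1: "onb c1" unfolding c1_def x_def by (rule phase_onb[OF c th])
  have tr1: "trc c1 X = trc c X" unfolding c1_def x_def by (rule phase_trc[OF c th X])
  have xl2: "x \<in> l2" using onb_l2[OF c1, of j] by (simp add: c1_def)
  have xx: "l2inner x x = 1" using onb_on[OF c1, of j j] by (simp add: c1_def)
  define r where "r = (of_real (cmod z) :: complex)"
  have xy: "l2inner x y = r"
  proof -
    have "l2inner x y = \<theta> * z" unfolding x_def z_def by (rule inner_scale_left)
    also have "\<dots> = cnj z * z / of_real (cmod z)" by (simp add: \<theta>_def)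
    also have "cnj z * z = of_real ((cmod z)^2)" by (metis complex_norm_square mult.commute)
    finally show ?thesis using zn by (simp add: r_def power2_eq_square)
  qed
  have yx: "l2inner y x = r" using xy inner_cnj[of y x] by (simp add: r_def)
  have c1L: "\<forall>l\<in>L. c1 l = c l" using jL by (auto simp: c1_def)
  have orthx: "l2inner (c l) x = 0" if "l \<in> L" for l
  proof -
    have "l2inner (c l) x = cnj \<theta> * l2inner (c l) (c j)" unfolding x_def by (rule inner_scale_right)
    thus ?thesis using that jL onb_on[OF c, of l j] by auto
  qed
  define dd where "dd = (\<lambda>t. x t - y t)"
  have ddl2: "dd \<in> l2" unfolding dd_def using xl2 y(1) by (rule l2_diff)
  show ?thesis
  proof (cases "l2inner dd dd = 0")
    case True
    hence "dd = (\<lambda>t. 0)" using inner_self_zero[OF ddl2] by blast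
    hence "\<And>t. x t - y t = 0" unfolding dd_def by (metis fun_cong)
    hence "x = y" by (simp add: fun_eq_iff)
    thus ?thesis using c1 jL c1L tr1 by (intro exI[of _ c1] exI[of _ j]) (auto simp: c1_def)
  next
    case False
    define c2 where "c2 = (\<lambda>i. hh dd (c1 i))"
    have c2: "onb c2" unfolding c2_def by (rule hh_onb[OF c1 ddl2 False])
    have tr2: "trc c2 X = trc c1 X" unfolding c2_def by (rule hh_trc[OF c1 X db ddl2 False])
    have Dv: "l2inner dd dd = 2 - 2 * r"
    proof -
      have "l2inner dd dd = l2inner x dd - l2inner y dd"
        unfolding dd_def[of] using xl2 y(1) ddl2 by (simp add: inner_diff_left dd_def)
      also have "\<dots> = (l2inner x x - l2inner x y) - (l2inner y x - l2inner y y)"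
        unfolding dd_def using xl2 y(1) by (simp add: inner_diff_right)
      finally show ?thesis using xx xy yx y(2) by simp
    qed
    have xd: "l2inner x dd = 1 - r"
      unfolding dd_def using xl2 y(1) xx xy by (simp add: inner_diff_right)
    have r1: "2 - 2 * r \<noteq> 0" using False Dv by simp
    have "hh dd x = (\<lambda>t. x t - 1 * dd t)"
    proof -
      have "2 / l2inner dd dd * l2inner x dd = 1" using r1 by (simp add: Dv xd field_simps)
      thus ?thesis unfolding hh_def by simp
    qed
    hence c2j: "c2 j = y" by (simp add: c2_def c1_def dd_def)
    have c2L: "c2 l = c l" if l: "l \<in> L" for l
    proof -
      have "l2inner (c l) dd = 0"
        unfolding dd_def using xl2 y(1) onb_l2[OF c] orthx[OF l] orth[OF l] by (simp add: inner_diff_right)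
      hence "hh dd (c l) = c l" by (simp add: hh_def)
      thus ?thesis using c1L l by (simp add: c2_def)
    qed
    show ?thesis using c2 jL c2j c2L tr2 tr1 by (intro exI[of _ c2] exI[of _ j]) auto
  qed
qed

lemma build:
  fixes b :: "'i \<Rightarrow> ('i \<Rightarrow> complex)"
  assumes b: "onb b" and X: "bounded_op X" and db: "dbound X C" and g: "orthonormal_fam n g"
  shows "k \<le> n \<Longrightarrow> \<exists>c J. onb c \<and> inj_on J {..<k} \<and> (\<forall>l<k. c (J l) = g l) \<and> trc c X = trc b X"
proof (induction k)
  case 0
  show ?case using b by (intro exI[of _ b] exI[of _ "\<lambda>_. undefined"]) simp
next
  case (Suc k)
  hence k: "k < n" by simp
  obtain c J where c: "onb c" and J: "inj_on J {..<k}" and cJ: "\<forall>l<k. c (J l) = g l"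
    and tr: "trc c X = trc b X" using Suc k by auto
  have gl2: "g l \<in> l2" if "l < n" for l using g that by (simp add: orthonormal_fam_def)
  have gon: "l2inner (g l) (g l') = (if l = l' then 1 else 0)" if "l < n" "l' < n" for l l'
    using g that by (simp add: orthonormal_fam_def)
  have orth: "l2inner (c l) (g k) = 0" if "l \<in> J ` {..<k}" for l
    using that cJ gon k by auto
  obtain c2 j where c2: "onb c2" and jL: "j \<notin> J ` {..<k}" and c2j: "c2 j = g k"
    and c2L: "\<forall>l\<in>J ` {..<k}. c2 l = c l" and tr2: "trc c2 X = trc c X"
  proof -
    have g1: "l2inner (g k) (g k) = 1" using gon[OF k k] by simp
    show ?thesis using build_step[OF c X db gl2[OF k] g1 orth] that by blast
  qed
  define J' where "J' = J(k := j)"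
  have "inj_on J' {..<Suc k}"
  proof -
    have "inj_on J' {..<k}" using J by (simp add: J'_def inj_on_def)
    moreover have "J' k \<notin> J' ` {..<k}" using jL by (auto simp: J'_def)
    ultimately have "inj_on J' (insert k {..<k})" by simp
    thus ?thesis by (simp add: lessThan_Suc)
  qed
  moreover have "\<forall>l<Suc k. c2 (J' l) = g l"
    using c2j c2L cJ by (auto simp: J'_def less_Suc_eq)
  ultimately show ?case using c2 tr2 tr by (intro exI[of _ c2] exI[of _ J']) auto
qed


lemma approx:
  fixes b :: "'i \<Rightarrow> ('i \<Rightarrow> complex)"
  assumes b: "onb b" and X: "bounded_op X" and db: "dbound X C" and g: "orthonormal_fam n g"
    and tail: "\<And>m f. orthonormal_fam m f \<Longrightarrow> (\<forall>k<m. \<forall>l<n. l2inner (f k) (g l) = 0) \<Longrightarrow>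
        (\<Sum>k<m. cmod (l2inner (X (f k)) (f k))) \<le> \<epsilon>"
  shows "cmod (trc b X - (\<Sum>l<n. l2inner (X (g l)) (g l))) \<le> \<epsilon>"
proof -
  obtain c J where c: "onb c" and J: "inj_on J {..<n}" and cJ: "\<forall>l<n. c (J l) = g l"
    and tr: "trc c X = trc b X" using build[OF b X db g, of n] by auto
  define f where "f i = l2inner (X (c i)) (c i)" for i
  define G where "G = J ` {..<n}"
  have fs: "f summable_on UNIV" unfolding f_def[abs_def] by (rule diag_summable[OF c db])
  have fG: "f summable_on G" "f summable_on -G" using summable_on_subset_banach[OF fs] by auto
  have "infsum f (G \<union> -G) = infsum f G + infsum f (-G)"
    by (rule infsum_Un_disjoint[OF fG(1) fG(2)]) auto
  hence split: "trc c X = infsum f G + infsum f (-G)" by (simp add: trc_def f_def[abs_def])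
  have finG: "infsum f G = (\<Sum>l<n. l2inner (X (g l)) (g l))"
  proof -
    have "infsum f G = sum f G" by (simp add: G_def)
    also have "\<dots> = (\<Sum>l<n. f (J l))" unfolding G_def by (rule sum.reindex[OF J, unfolded comp_def])
    also have "\<dots> = (\<Sum>l<n. l2inner (X (g l)) (g l))" by (rule sum.cong) (auto simp: f_def cJ)
    finally show ?thesis .
  qed
  have abs: "(\<lambda>i. norm (f i)) summable_on -G" using fG(2) summable_on_iff_abs_summable_on_complex by blast
  have "cmod (infsum f (-G)) \<le> infsum (\<lambda>i. norm (f i)) (-G)" by (rule norm_infsum_bound) (rule abs)
  also have "\<dots> \<le> \<epsilon>"
  proof (rule infsum_le_finite_sums[OF abs])
    fix F assume F: "finite F" "F \<subseteq> -G"
    obtain h where h: "bij_betw h {..<card F} F" "orthonormal_fam (card F) (\<lambda>k. c (h k))"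
      using enum_fam[OF F(1), of c] onb_l2[OF c] onb_on[OF c] by metis
    have cross: "\<forall>k<card F. \<forall>l<n. l2inner (c (h k)) (g l) = 0"
    proof (intro allI impI)
      fix k l assume k: "k < card F" and l: "l < n"
      have "h k \<in> F" using h(1) k bij_betwE by blast
      hence "h k \<noteq> J l" using F(2) l by (auto simp: G_def)
      thus "l2inner (c (h k)) (g l) = 0" using cJ l onb_on[OF c] by metis
    qed
    have "(\<Sum>i\<in>F. norm (f i)) = (\<Sum>k<card F. cmod (l2inner (X (c (h k))) (c (h k))))"
      using sum.reindex_bij_betw[OF h(1), of "\<lambda>i. norm (f i)"] by (simp add: f_def)
    also have "\<dots> \<le> \<epsilon>" by (rule tail[OF h(2) cross])
    finally show "(\<Sum>i\<in>F. norm (f i)) \<le> \<epsilon>" .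
  qed
  finally have "cmod (infsum f (-G)) \<le> \<epsilon>" .
  moreover have "trc b X - (\<Sum>l<n. l2inner (X (g l)) (g l)) = infsum f (-G)"
    using split finG tr by simp
  ultimately show ?thesis by simp
qed

lemma concat_fam:
  assumes g: "orthonormal_fam n g" and f: "orthonormal_fam m f"
    and cross: "\<forall>k<m. \<forall>l<n. l2inner (f k) (g l) = 0"
  shows "orthonormal_fam (n + m) (\<lambda>k. if k < n then g k else f (k - n))"
  unfolding orthonormal_fam_def
proof (intro conjI allI impI)
  fix k assume "k < n + m"
  thus "(if k < n then g k else f (k - n)) \<in> l2" using f g by (auto simp: orthonormal_fam_def)
next
  fix k l assume k: "k < n + m" and l: "l < n + m"
  have cross': "l2inner (g l) (f k) = 0" if "k < m" "l < n" for k l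
    using cross that inner_cnj[of "g l" "f k"] by simp
  show "l2inner (if k < n then g k else f (k - n)) (if l < n then g l else f (l - n)) = (if k = l then 1 else 0)"
    using k l f g cross cross' by (auto simp: orthonormal_fam_def)
qed

lemma sum_concat: fixes n m :: nat shows "(\<Sum>k<n + m. \<phi> (if k < n then g k else f (k - n))) = (\<Sum>k<n. \<phi> (g k)) + (\<Sum>k<m. \<phi> (f k))"
  by (induction m) (simp_all add: algebra_simps)

lemma trace_basis_indep:
  fixes b c :: "'i \<Rightarrow> ('i \<Rightarrow> complex)"
  assumes b: "onb b" and c: "onb c" and X: "bounded_op X" and db: "dbound X C"
  shows "trc b X = trc c X"
proof -
  define V where "V = {s. \<exists>n e. orthonormal_fam n e \<and> s = (\<Sum>k<n. cmod (l2inner (X (e k)) (e k)))}"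
  have bdd: "bdd_above V" unfolding V_def using db by (auto simp: dbound_def intro!: bdd_aboveI)
  have ne: "0 \<in> V" unfolding V_def by (rule CollectI, rule exI[of _ 0]) (simp add: orthonormal_fam_def)
  define S where "S = Sup V"
  have main: "cmod (trc b X - trc c X) \<le> 2 * \<epsilon>" if eps: "\<epsilon> > 0" for \<epsilon>
  proof -
    have "S - \<epsilon> < Sup V" using eps by (simp add: S_def)
    then obtain s where sV: "s \<in> V" and ss: "S - \<epsilon> < s" using less_cSup_iff[of V] ne bdd by blast
    then obtain n g where g: "orthonormal_fam n g" and s: "s = (\<Sum>k<n. cmod (l2inner (X (g k)) (g k)))"
      unfolding V_def by blast
    have tail: "(\<Sum>k<m. cmod (l2inner (X (f k)) (f k))) \<le> \<epsilon>"
      if f: "orthonormal_fam m f" and cr: "\<forall>k<m. \<forall>l<n. l2inner (f k) (g l) = 0" for m f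
    proof -
      have "(\<Sum>k<n + m. cmod (l2inner (X (if k < n then g k else f (k - n))) (if k < n then g k else f (k - n)))) \<in> V"
        unfolding V_def using concat_fam[OF g f cr] by blast
      hence "(\<Sum>k<n + m. cmod (l2inner (X (if k < n then g k else f (k - n))) (if k < n then g k else f (k - n)))) \<le> S"
        unfolding S_def using bdd by (rule cSup_upper)
      moreover have "(\<Sum>k<n + m. cmod (l2inner (X (if k < n then g k else f (k - n))) (if k < n then g k else f (k - n))))
          = s + (\<Sum>k<m. cmod (l2inner (X (f k)) (f k)))"
        using sum_concat[where \<phi>="\<lambda>v. cmod (l2inner (X v) v)" and n=n and m=m and g=g and f=f] s by simp
      ultimately show ?thesis using ss by linarith
    qed
    have a1: "cmod (trc b X - (\<Sum>l<n. l2inner (X (g l)) (g l))) \<le> \<epsilon>"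
      by (rule approx[OF b X db g]) (rule tail)
    have a2: "cmod (trc c X - (\<Sum>l<n. l2inner (X (g l)) (g l))) \<le> \<epsilon>"
      by (rule approx[OF c X db g]) (rule tail)
    have "cmod (trc b X - trc c X) \<le> cmod (trc b X - (\<Sum>l<n. l2inner (X (g l)) (g l))) + cmod (trc c X - (\<Sum>l<n. l2inner (X (g l)) (g l)))"
      using norm_triangle_ineq4[of "trc b X - (\<Sum>l<n. l2inner (X (g l)) (g l))" "trc c X - (\<Sum>l<n. l2inner (X (g l)) (g l))"]
      by simp
    thus ?thesis using a1 a2 by linarith
  qed
  show ?thesis
  proof (rule ccontr)
    assume "trc b X \<noteq> trc c X"
    hence pos: "cmod (trc b X - trc c X) > 0" by simp
    have "cmod (trc b X - trc c X) \<le> 2 * (cmod (trc b X - trc c X) / 4)"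
      using main[of "cmod (trc b X - trc c X) / 4"] pos by simp
    thus False using pos by simp
  qed
qed


lemma delta_onb: "onb delta"
  unfolding onb_def
proof (intro conjI allI ballI)
  fix i show "delta i \<in> l2" by (rule delta_l2)
next
  fix i j have "l2inner (delta i) (delta j) = delta i j" by (rule inner_delta_right)
  thus "l2inner (delta i) (delta j) = (if i = j then 1 else 0)" by (simp add: delta_def)
next
  fix u w :: "'a \<Rightarrow> complex" assume "u \<in> l2" "w \<in> l2"
  thus "((\<lambda>i. l2inner u (delta i) * l2inner (delta i) w) has_sum l2inner u w) UNIV"
    by (simp add: inner_delta_right inner_delta_left inner_has_sum)
qed

lemma unitary_bop: "unitary_op W \<Longrightarrow> bounded_op W" by (simp add: unitary_op_def)
lemma unitary_l2: "unitary_op W \<Longrightarrow> f \<in> l2 \<Longrightarrow> W f \<in> l2"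
  by (simp add: unitary_op_def bounded_op_def)
lemma unitary_inner: "unitary_op W \<Longrightarrow> f \<in> l2 \<Longrightarrow> g \<in> l2 \<Longrightarrow> l2inner (W f) (W g) = l2inner f g"
  by (simp add: unitary_op_def)

lemma onb_unitary:
  assumes W: "unitary_op W" and V: "\<And>f. f \<in> l2 \<Longrightarrow> V f \<in> l2" and WV: "\<And>f. f \<in> l2 \<Longrightarrow> W (V f) = f"
  shows "onb (\<lambda>i. W (delta i))"
  unfolding onb_def
proof (intro conjI allI ballI)
  fix i show "W (delta i) \<in> l2" using W delta_l2 by (rule unitary_l2)
next
  fix i j have "l2inner (W (delta i)) (W (delta j)) = l2inner (delta i) (delta j)"
    by (rule unitary_inner[OF W delta_l2 delta_l2])
  also have "\<dots> = delta i j" by (rule inner_delta_right)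
  finally show "l2inner (W (delta i)) (W (delta j)) = (if i = j then 1 else 0)" by (simp add: delta_def)
next
  fix u w :: "'a \<Rightarrow> complex" assume u: "u \<in> l2" and w: "w \<in> l2"
  have e1: "l2inner u (W (delta i)) = l2inner (V u) (delta i)" for i
    using unitary_inner[OF W V[OF u] delta_l2] WV[OF u] by simp
  have e2: "l2inner (W (delta i)) w = l2inner (delta i) (V w)" for i
    using unitary_inner[OF W delta_l2 V[OF w]] WV[OF w] by simp
  have "((\<lambda>i. l2inner (V u) (delta i) * l2inner (delta i) (V w)) has_sum l2inner (V u) (V w)) UNIV"
    using onb_pars[OF delta_onb V[OF u] V[OF w]] .
  moreover have "l2inner (V u) (V w) = l2inner u w"
    using unitary_inner[OF W V[OF u] V[OF w]] WV u w by simp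
  ultimately show "((\<lambda>i. l2inner u (W (delta i)) * l2inner (W (delta i)) w) has_sum l2inner u w) UNIV"
    by (simp add: e1 e2)
qed

lemma bop_comp: assumes A: "bounded_op A" and B: "bounded_op B" shows "bounded_op (\<lambda>f. A (B f))"
  unfolding bounded_op_def
proof (intro conjI ballI allI)
  fix f :: "'a \<Rightarrow> complex" assume "f \<in> l2" thus "A (B f) \<in> l2" using A B by (simp add: bop_l2)
next
  fix f g :: "'a \<Rightarrow> complex" assume "f \<in> l2" "g \<in> l2"
  thus "A (B (\<lambda>i. f i + g i)) = (\<lambda>i. A (B f) i + A (B g) i)" using A B by (simp add: bop_add bop_l2)
next
  fix c and f :: "'a \<Rightarrow> complex" assume "f \<in> l2"
  thus "A (B (\<lambda>i. c * f i)) = (\<lambda>i. c * A (B f) i)" using A B by (simp add: bop_scale bop_l2)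
next
  obtain CA where CA: "\<forall>f\<in>l2. l2norm (A f) \<le> CA * l2norm f" using bop_bound[OF A] by blast
  obtain CB where CB: "\<forall>f\<in>l2. l2norm (B f) \<le> CB * l2norm f" using bop_bound[OF B] by blast
  have "l2norm (A (B f)) \<le> (max CA 0 * CB) * l2norm f" if f: "f \<in> l2" for f
  proof -
    have "l2norm (A (B f)) \<le> CA * l2norm (B f)" using CA B f by (simp add: bop_l2)
    also have "\<dots> \<le> max CA 0 * l2norm (B f)" by (intro mult_right_mono) (auto simp: l2norm_nonneg)
    also have "\<dots> \<le> max CA 0 * (CB * l2norm f)" using CB f by (intro mult_left_mono) auto
    finally show ?thesis by simp
  qed
  thus "\<exists>C. \<forall>f\<in>l2. l2norm (A (B f)) \<le> C * l2norm f" by blast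
qed

lemma bop_cong: assumes Y: "bounded_op Y" and eq: "\<And>f. f \<in> l2 \<Longrightarrow> X f = Y f" shows "bounded_op X"
  unfolding bounded_op_def
proof (intro conjI ballI allI)
  fix f :: "'a \<Rightarrow> complex" assume "f \<in> l2" thus "X f \<in> l2" using Y eq by (simp add: bop_l2)
next
  fix f g :: "'a \<Rightarrow> complex" assume f: "f \<in> l2" and g: "g \<in> l2"
  have "X (\<lambda>i. f i + g i) = Y (\<lambda>i. f i + g i)" using f g by (intro eq l2_add)
  also have "\<dots> = (\<lambda>i. Y f i + Y g i)" using Y f g by (rule bop_add)
  finally show "X (\<lambda>i. f i + g i) = (\<lambda>i. X f i + X g i)" using eq f g by simp
next
  fix c and f :: "'a \<Rightarrow> complex" assume f: "f \<in> l2"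
  have "X (\<lambda>i. c * f i) = Y (\<lambda>i. c * f i)" using f by (intro eq l2_scale)
  also have "\<dots> = (\<lambda>i. c * Y f i)" using Y f by (rule bop_scale)
  finally show "X (\<lambda>i. c * f i) = (\<lambda>i. c * X f i)" using eq f by simp
next
  obtain C where "\<forall>f\<in>l2. l2norm (Y f) \<le> C * l2norm f" using bop_bound[OF Y] by blast
  thus "\<exists>C. \<forall>f\<in>l2. l2norm (X f) \<le> C * l2norm f" using eq by auto
qed

section \<open>The multiplier\<close>

lemma m_unit: "multiplier m \<Longrightarrow> cmod (m x y) = 1" by (simp add: multiplier_def)

lemma m_neg_left: assumes "multiplier m" "bicharacter m" shows "m (- x) y = cnj (m x y)"
proof -
  have "m x y * m (- x) y = 1"
    using assms by (metis bicharacter_def multiplier_def add.right_inverse)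
  hence "cnj (m x y) * (m x y * m (- x) y) = cnj (m x y)" by simp
  thus ?thesis using theta_unit'[OF m_unit[OF assms(1)]] by (simp add: mult.assoc[symmetric])
qed

lemma m_neg_right: assumes "multiplier m" "bicharacter m" shows "m x (- y) = cnj (m x y)"
proof -
  have "m x y * m x (- y) = 1"
    using assms by (metis bicharacter_def multiplier_def add.right_inverse)
  hence "cnj (m x y) * (m x y * m x (- y)) = cnj (m x y)" by simp
  thus ?thesis using theta_unit'[OF m_unit[OF assms(1)]] by (simp add: mult.assoc[symmetric])
qed

lemma half_add: "two_regular TYPE('x::topological_ab_group_add) \<Longrightarrow> half (x::'x) + half x = x"
  unfolding two_regular_def half_def
  by (metis (mono_tags, lifting) bij_is_surj surj_f_inv_f)

lemma m_diag: assumes "multiplier m" "bicharacter m" "\<forall>x y. m x y = cnj (m y x)"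
    "two_regular TYPE('x::topological_ab_group_add)"
  shows "m (x::'x) x = 1"
proof -
  define b where "b = half x"
  have bb: "b + b = x" unfolding b_def by (rule half_add[OF assms(4)])
  have "m b b * m b b = 1"
    using assms(3) theta_unit[OF m_unit[OF assms(1)], of b b] by metis
  moreover have "m (b + b) (b + b) = (m b b * m b b) * (m b b * m b b)"
    using assms(2) by (simp add: bicharacter_def algebra_simps)
  ultimately show ?thesis using bb by simp
qed


section \<open>The representation\<close>

lemma U_unit: "proj_rep m U \<Longrightarrow> unitary_op (U x)" by (simp add: proj_rep_def)

lemma U_comp: "proj_rep m U \<Longrightarrow> f \<in> l2 \<Longrightarrow> U x (U y f) = (\<lambda>i. m x y * U (x + y) f i)"
  by (simp add: proj_rep_def)

lemma U_zero: assumes mu: "multiplier m" and pr: "proj_rep m U" and f: "f \<in> l2" shows "U 0 f = f"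
proof -
  have "U 0 ` l2 = l2" using U_unit[OF pr] by (simp add: unitary_op_def)
  then obtain g where g: "g \<in> l2" and fg: "f = U 0 g" using f by blast
  have "U 0 (U 0 g) = (\<lambda>i. m 0 0 * U (0 + 0) g i)" by (rule U_comp[OF pr g])
  also have "\<dots> = U 0 g" using mu by (simp add: multiplier_def)
  finally show ?thesis using fg by simp
qed

lemma U_inv:
  assumes mu: "multiplier m" and bi: "bicharacter m" and sy: "\<forall>x y. m x y = cnj (m y x)"
    and tr: "two_regular TYPE('x::topological_ab_group_add)" and pr: "proj_rep m (U :: 'x \<Rightarrow> _)"
    and f: "f \<in> l2"
  shows "U (- z) (U z f) = f" "U z (U (- z) f) = f"
proof -
  have "m (- z) z = 1" using m_neg_left[OF mu bi] m_diag[OF mu bi sy tr] by simp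
  thus "U (- z) (U z f) = f" using U_comp[OF pr f, of "- z" z] U_zero[OF mu pr f] by simp
  have "m z (- z) = 1" using m_neg_right[OF mu bi] m_diag[OF mu bi sy tr] by simp
  thus "U z (U (- z) f) = f" using U_comp[OF pr f, of z "- z"] U_zero[OF mu pr f] by simp
qed

lemma adj_U:
  assumes mu: "multiplier m" and bi: "bicharacter m" and sy: "\<forall>x y. m x y = cnj (m y x)"
    and tr: "two_regular TYPE('x::topological_ab_group_add)" and pr: "proj_rep m (U :: 'x \<Rightarrow> _)"
    and f: "f \<in> l2"
  shows "adj (U z) f = U (- z) f"
proof
  fix i
  have Uf: "U (- z) f \<in> l2" using U_unit[OF pr] f by (rule unitary_l2)
  have "U (- z) f i = l2inner (U (- z) f) (delta i)" by (rule inner_delta_right[symmetric])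
  also have "\<dots> = l2inner (U z (U (- z) f)) (U z (delta i))"
    by (rule unitary_inner[OF U_unit[OF pr] Uf delta_l2, symmetric])
  also have "\<dots> = l2inner f (U z (delta i))" using U_inv(2)[OF mu bi sy tr pr f] by simp
  finally show "adj (U z) f i = U (- z) f i" by (simp add: adj_def)
qed

theorem lemma6p15:
  fixes m :: "'x::{topological_ab_group_add,t2_space} \<Rightarrow> 'x \<Rightarrow> complex"
    and U :: "'x \<Rightarrow> ('i \<Rightarrow> complex) \<Rightarrow> ('i \<Rightarrow> complex)"
    and A :: "('i \<Rightarrow> complex) \<Rightarrow> ('i \<Rightarrow> complex)"
    and x \<xi> :: 'x
  assumes "locally_compact_space (euclidean :: 'x topology)"
    and "multiplier m"
    and "heisenberg m"
    and "proj_rep m U"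
    and "strongly_continuous U"
    and "irreducible_rep U"
    and "square_integrable U"
    and "two_regular TYPE('x)"
    and "bicharacter m"
    and "\<forall>x y. m x y = cnj (m y x)"
    and "trace_class A"
  shows "FU U (\<lambda>f. U (half x) (A (U (half x) f))) \<xi> = FU U A (\<xi> - x)"
proof -
  note mu = assms(2) and pr = assms(4) and tr = assms(8) and bi = assms(9) and sy = assms(10)
    and tc = assms(11)
  define a where "a = half x"
  have aa: "a + a = x" unfolding a_def by (rule half_add[OF tr])
  define V where "V = U a"
  define W where "W = U (- a)"
  define X where "X = (\<lambda>f. A (adj (U (\<xi> - x)) f))"
  have Aop: "bounded_op A" using tc by (simp add: trace_class_def)
  have Ul2: "\<And>z f. f \<in> l2 \<Longrightarrow> U z f \<in> l2" using U_unit[OF pr] unitary_l2 by blast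
  have Xeq: "X f = A (U (x - \<xi>) f)" if f: "f \<in> l2" for f
    unfolding X_def using adj_U[OF mu bi sy tr pr f, of "\<xi> - x"] by simp
  have Xop: "bounded_op X"
    by (rule bop_cong[OF bop_comp[OF Aop unitary_bop[OF U_unit[OF pr]]]]) (rule Xeq)
  obtain C where C: "\<forall>n e f. orthonormal_fam n e \<longrightarrow> orthonormal_fam n f \<longrightarrow>
        (\<Sum>k<n. cmod (l2inner (A (e k)) (f k))) \<le> C" using tc by (auto simp: trace_class_def)
  have db: "dbound X C" unfolding dbound_def
  proof (intro allI impI)
    fix n and e :: "nat \<Rightarrow> ('i \<Rightarrow> complex)" assume e: "orthonormal_fam n e"
    have e': "orthonormal_fam n (\<lambda>k. U (x - \<xi>) (e k))"
      using e unitary_inner[OF U_unit[OF pr]] Ul2 by (simp add: orthonormal_fam_def)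
    have "(\<Sum>k<n. cmod (l2inner (X (e k)) (e k))) = (\<Sum>k<n. cmod (l2inner (A (U (x - \<xi>) (e k))) (e k)))"
      by (rule sum.cong) (use e in \<open>auto simp: Xeq orthonormal_fam_def\<close>)
    also have "\<dots> \<le> C" using C e' e by blast
    finally show "(\<Sum>k<n. cmod (l2inner (X (e k)) (e k))) \<le> C" .
  qed
  define c where "c = (\<lambda>i. W (delta i))"
  have c: "onb c" unfolding c_def W_def
    by (rule onb_unitary[OF U_unit[OF pr], of "U a"]) (auto simp: Ul2 U_inv[OF mu bi sy tr pr])
  have indep: "trc c X = trc delta X" by (rule trace_basis_indep[OF c delta_onb Xop db])
  have rhs: "FU U A (\<xi> - x) = trc delta X"
    unfolding FU_def trace_def trc_def X_def by (simp add: inner_delta_right)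
  have key: "V (U (- \<xi>) h) = U (x - \<xi>) (W h)" if h: "h \<in> l2" for h
  proof -
    have f1: "V (U (- \<xi>) h) = (\<lambda>i. m a (- \<xi>) * U (a + - \<xi>) h i)" unfolding V_def by (rule U_comp[OF pr h])
    have f2: "U (x - \<xi>) (W h) = (\<lambda>i. m (x - \<xi>) (- a) * U ((x - \<xi>) + - a) h i)"
      unfolding W_def by (rule U_comp[OF pr h])
    have ge: "(x - \<xi>) + - a = a + - \<xi>" using aa by (simp add: algebra_simps)
    have meq: "m (x - \<xi>) (- a) = m a (- \<xi>)"
    proof -
      have xe: "x - \<xi> = a + (a + - \<xi>)" using aa by (simp add: algebra_simps)
      have bl: "\<And>p q r. m (p + q) r = m p r * m q r" using bi by (simp add: bicharacter_def)
      have "m (x - \<xi>) a = m a a * (m a a * m (- \<xi>) a)" unfolding xe by (simp only: bl)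
      also have "\<dots> = cnj (m \<xi> a)" using m_diag[OF mu bi sy tr, of a] m_neg_left[OF mu bi] by simp
      finally have "m (x - \<xi>) a = cnj (m \<xi> a)" .
      hence "m (x - \<xi>) (- a) = m \<xi> a" using m_neg_right[OF mu bi, of "x - \<xi>" a] by simp
      also have "\<dots> = cnj (m a \<xi>)" using sy by blast
      also have "\<dots> = m a (- \<xi>)" using m_neg_right[OF mu bi, of a \<xi>] by simp
      finally show ?thesis .
    qed
    have "U (x - \<xi>) (W h) = (\<lambda>i. m a (- \<xi>) * U (a + - \<xi>) h i)" unfolding f2 by (simp only: ge meq)
    thus ?thesis using f1 by simp
  qed
  have lhs_term: "V (A (V (adj (U \<xi>) (delta i)))) i = l2inner (X (c i)) (c i)" for i
  proof -
    have Wd: "W (delta i) \<in> l2" unfolding W_def by (rule Ul2[OF delta_l2])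
    have y: "A (U (x - \<xi>) (W (delta i))) \<in> l2" using Aop Ul2[OF Wd] by (simp add: bop_l2)
    have "V (A (V (adj (U \<xi>) (delta i)))) i = V (A (V (U (- \<xi>) (delta i)))) i"
      using adj_U[OF mu bi sy tr pr delta_l2] by simp
    also have "\<dots> = V (A (U (x - \<xi>) (W (delta i)))) i" using key[OF delta_l2] by simp
    also have "\<dots> = l2inner (V (A (U (x - \<xi>) (W (delta i))))) (delta i)" by (rule inner_delta_right[symmetric])
    also have "\<dots> = l2inner (W (V (A (U (x - \<xi>) (W (delta i)))))) (W (delta i))"
    proof -
      have Vy: "V (A (U (x - \<xi>) (W (delta i)))) \<in> l2" unfolding V_def by (rule Ul2[OF y])
      show ?thesis by (rule unitary_inner[OF U_unit[OF pr] Vy delta_l2, of "- a", folded W_def, symmetric])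
    qed
    also have "W (V (A (U (x - \<xi>) (W (delta i))))) = A (U (x - \<xi>) (W (delta i)))"
      unfolding W_def V_def by (rule U_inv(1)[OF mu bi sy tr pr y[unfolded W_def]])
    also have "A (U (x - \<xi>) (W (delta i))) = X (W (delta i))" by (rule Xeq[OF Wd, symmetric])
    finally show ?thesis by (simp add: c_def)
  qed
  have lhs: "FU U (\<lambda>f. U (half x) (A (U (half x) f))) \<xi> = trc c X"
    unfolding FU_def trace_def trc_def a_def[symmetric] V_def[symmetric] using lhs_term by simp
  show ?thesis using lhs rhs indep by simp
qed

end
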